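(* For any initial vector $v_0\in\mathbb{R}^d$ (such that the normalized vectors below are defined) and all $i\in[n]$, $$\|P\widehat v_i\|_2\le\sqrt{\alpha}+\|Pv_0\|_2/\|v_i\|_2.$$ Further, if $v_0=v^*$, then $\|P\widehat v_i\|_2\le\sqrt{\alpha}$.
   Context: Setting: $\phi(x_1),\dots,\phi(x_n)\in\mathbb{R}^d$ are feature vectors of samples $x_1,\dots,x_n$; $\eta\in(0,0.1)$; $\beta\ge\alpha>0$; $v^*\in\mathbb{R}^d$ satisfies $\|v^*\|_2=1$, $\eta\sum_{i=1}^n\langle v^*,\phi(x_i)\rangle^2=\beta$, and $\eta\sum_{i=1}^n\langle w,\phi(x_i)\rangle^2\le\alpha$ for every $w$ with $\|w\|_2\le 1$ and $\langle w,v^*\rangle=0$. $P=I-v^*(v^* )^\top$. Given $v_0$, the iterates are $v_i=v_{i-1}+\eta\langle\phi(x_i),v_{i-1}\rangle\phi(x_i)$ for $i\in[n]$, and $\widehat v_i=v_i/\|v_i\|_2$. *)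

theory Defs
  imports "HOL-Analysis.Analysis"
begin

text \<open>Oja-type iterates: v_0 given, v_i = v_{i-1} + eta <phi(x_i), v_{i-1}> phi(x_i).
  Feature vectors phi(x_i) are given by phi i for i = 1..n.\<close>
primrec oja_iter :: "real \<Rightarrow> (nat \<Rightarrow> 'a::real_inner) \<Rightarrow> 'a \<Rightarrow> nat \<Rightarrow> 'a" where
  "oja_iter eta phi v0 0 = v0"
| "oja_iter eta phi v0 (Suc i) =
     oja_iter eta phi v0 i + (eta * inner (phi (Suc i)) (oja_iter eta phi v0 i)) *\<^sub>R phi (Suc i)"

definition proj_perp :: "'a::real_inner \<Rightarrow> 'a \<Rightarrow> 'a" where
  "proj_perp vs w = w - (inner vs w) *\<^sub>R vs"

end

theory Submission
  imports Defs
begin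

lemma oja_sum:
  "oja_iter eta phi v0 i = v0 + (\<Sum>j=1..i. (eta * inner (phi j) (oja_iter eta phi v0 (j-1))) *\<^sub>R phi j)"
  by (induction i) auto

lemma oja_norm:
  assumes "0 < eta"
  shows "norm v0 ^ 2 + eta * (\<Sum>j=1..i. (inner (phi j) (oja_iter eta phi v0 (j-1)))\<^sup>2)
          \<le> norm (oja_iter eta phi v0 i) ^ 2"
proof (induction i)
  case 0
  then show ?case by simp
next
  case (Suc i)
  define V where "V = oja_iter eta phi v0 i"
  define c where "c = inner (phi (Suc i)) V"
  have "norm (V + (eta * c) *\<^sub>R phi (Suc i)) ^ 2
      = norm V ^ 2 + 2 * eta * c * c + (eta * c)^2 * norm (phi (Suc i)) ^ 2"
    unfolding power2_norm_eq_inner c_def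
    by (simp add: inner_add_left inner_add_right inner_commute algebra_simps power2_eq_square)
  also have "\<dots> \<ge> norm V ^ 2 + eta * c^2"
  proof -
    have "0 \<le> eta * c^2" using assms by simp
    moreover have "0 \<le> (eta * c)^2 * norm (phi (Suc i)) ^ 2" by simp
    moreover have "2 * eta * c * c = 2 * (eta * c^2)" by (simp add: power2_eq_square)
    ultimately show ?thesis by linarith
  qed
  finally have "norm V ^ 2 + eta * c^2 \<le> norm (V + (eta * c) *\<^sub>R phi (Suc i)) ^ 2" .
  with Suc show ?case
    by (simp add: V_def c_def algebra_simps)
qed

lemma proj_perp_linear:
  "proj_perp vs (x + y) = proj_perp vs x + proj_perp vs y"
  "proj_perp vs (c *\<^sub>R x) = c *\<^sub>R proj_perp vs x"
  unfolding proj_perp_def by (auto simp: inner_add_right algebra_simps)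

theorem lemmaC1:
  fixes phi :: "nat \<Rightarrow> 'a::euclidean_space" and vstar v0 :: 'a
    and n :: nat and eta alpha beta :: real
  assumes eta: "0 < eta" "eta < 0.1"
    and ab: "0 < alpha" "alpha \<le> beta"
    and vnorm: "norm vstar = 1"
    and vbeta: "eta * (\<Sum>i=1..n. (inner vstar (phi i))\<^sup>2) = beta"
    and orth: "\<And>w. norm w \<le> 1 \<Longrightarrow> inner w vstar = 0 \<Longrightarrow>
                 eta * (\<Sum>i=1..n. (inner w (phi i))\<^sup>2) \<le> alpha"
    and nz: "\<forall>i\<in>{1..n}. oja_iter eta phi v0 i \<noteq> 0"
  shows "(\<forall>i\<in>{1..n}.
            norm (proj_perp vstar (oja_iter eta phi v0 i /\<^sub>R norm (oja_iter eta phi v0 i)))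
              \<le> sqrt alpha + norm (proj_perp vstar v0) / norm (oja_iter eta phi v0 i))
       \<and> (v0 = vstar \<longrightarrow> (\<forall>i\<in>{1..n}.
            norm (proj_perp vstar (oja_iter eta phi v0 i /\<^sub>R norm (oja_iter eta phi v0 i)))
              \<le> sqrt alpha))"
proof -
  define V where "V = oja_iter eta phi v0"
  define c where "c j = inner (phi j) (V (j-1))" for j
  have vv: "inner vstar vstar = 1" using vnorm by (simp add: dot_square_norm)
  have main: "norm (proj_perp vstar (V i /\<^sub>R norm (V i)))
              \<le> sqrt alpha + norm (proj_perp vstar v0) / norm (V i)" if i: "i \<in> {1..n}" for i
  proof -
    define S where "S = (\<Sum>j=1..i. (eta * c j) *\<^sub>R phi j)"
    have VS: "V i = v0 + S" unfolding V_def S_def c_def by (rule oja_sum)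
    have Vn: "norm v0 ^ 2 + eta * (\<Sum>j=1..i. (c j)\<^sup>2) \<le> norm (V i) ^ 2"
      unfolding V_def c_def using oja_norm[OF eta(1)] by blast
    have npos: "norm (V i) > 0" using nz i by (simp add: V_def)
    define y where "y = proj_perp vstar S"
    have ybound: "norm y \<le> sqrt alpha * norm (V i)"
    proof (cases "y = 0")
      case True then show ?thesis using ab npos by simp
    next
      case False
      define w where "w = y /\<^sub>R norm y"
      have wn: "norm w = 1" using False by (simp add: w_def)
      have yv: "inner y vstar = 0" unfolding y_def proj_perp_def
        by (simp add: inner_diff_left inner_diff_right vv inner_commute)
      have wv: "inner w vstar = 0" using yv by (simp add: w_def)
      have "norm y = inner w y" using False
        by (simp add: w_def dot_square_norm power2_eq_square)
      also have "inner w y = inner w S" unfolding y_def proj_perp_def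
        using wv by (simp add: inner_diff_right inner_commute)
      also have "\<dots> = (\<Sum>j=1..i. (eta * c j) * inner w (phi j))"
        unfolding S_def by (simp add: inner_sum_right)
      finally have ny: "norm y = (\<Sum>j=1..i. (eta * c j) * inner w (phi j))" .
      have "(norm y)^2 \<le> (\<Sum>j=1..i. (eta * c j)^2) * (\<Sum>j=1..i. (inner w (phi j))^2)"
        unfolding ny by (rule Cauchy_Schwarz_ineq_sum)
      also have "\<dots> = (eta * (\<Sum>j=1..i. (c j)^2)) * (eta * (\<Sum>j=1..i. (inner w (phi j))^2))"
      proof -
        have "(\<Sum>j=1..i. (eta * c j)^2) = eta^2 * (\<Sum>j=1..i. (c j)^2)"
          by (simp add: power_mult_distrib sum_distrib_left)
        moreover have "eta * (\<Sum>j=1..i. (inner w (phi j))^2) = eta * (\<Sum>j=1..i. (inner w (phi j))^2)" ..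
        ultimately show ?thesis by (simp add: power2_eq_square mult_ac)
      qed
      also have "\<dots> \<le> norm (V i) ^ 2 * alpha"
      proof (rule mult_mono)
        show "eta * (\<Sum>j=1..i. (c j)^2) \<le> norm (V i) ^ 2" using Vn zero_le_power2[of "norm v0"] by linarith
        have "(\<Sum>j=1..i. (inner w (phi j))^2) \<le> (\<Sum>j=1..n. (inner w (phi j))^2)"
          using i by (intro sum_mono2) auto
        then have "eta * (\<Sum>j=1..i. (inner w (phi j))^2) \<le> eta * (\<Sum>j=1..n. (inner w (phi j))^2)"
          using eta by simp
        also have "\<dots> \<le> alpha" using orth wn wv by simp
        finally show "eta * (\<Sum>j=1..i. (inner w (phi j))^2) \<le> alpha" .
        show "0 \<le> norm (V i) ^ 2" by simp
        have "0 \<le> (\<Sum>j=1..i. (inner w (phi j))^2)" by (rule sum_nonneg) simp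
        then show "0 \<le> eta * (\<Sum>j=1..i. (inner w (phi j))^2)" using eta(1) by simp
      qed
      also have "\<dots> = (sqrt alpha * norm (V i))^2"
        using ab by (simp add: power_mult_distrib)
      finally have sq: "(norm y)^2 \<le> (sqrt alpha * norm (V i))^2" .
      have nn: "0 \<le> sqrt alpha * norm (V i)" using ab by simp
      show ?thesis by (rule power2_le_imp_le[OF sq nn])
    qed
    have "norm (proj_perp vstar (V i)) \<le> norm (proj_perp vstar v0) + norm y"
      unfolding VS y_def proj_perp_linear by (rule norm_triangle_ineq)
    also have "\<dots> \<le> norm (proj_perp vstar v0) + sqrt alpha * norm (V i)" using ybound by simp
    finally have h: "norm (proj_perp vstar (V i)) \<le> norm (proj_perp vstar v0) + sqrt alpha * norm (V i)" .
    have "norm (proj_perp vstar (V i /\<^sub>R norm (V i))) = norm (proj_perp vstar (V i)) / norm (V i)"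
      unfolding proj_perp_linear using npos by (simp add: divide_inverse_commute)
    also have "\<dots> \<le> (norm (proj_perp vstar v0) + sqrt alpha * norm (V i)) / norm (V i)"
      using h npos by (simp add: divide_right_mono)
    also have "\<dots> = sqrt alpha + norm (proj_perp vstar v0) / norm (V i)"
      using npos by (simp add: field_simps)
    finally show ?thesis .
  qed
  have p0: "proj_perp vstar vstar = 0" unfolding proj_perp_def by (simp add: vv)
  show ?thesis
    using main p0 unfolding V_def by auto
qed

end
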